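(* Consider the random graph mixture model with $\kappa$-state edge variables and $Q\ge 2$ groups. If $\kappa\ge\binom{Q+1}2$ and the $\kappa$-entry vectors $\{\mathbf p_{ql}\}_{1\le q\le l\le Q}$ are linearly independent, then the parameters $\boldsymbol\pi$ and $\{\mathbf p_{ql}\}_{1\le q\le l\le Q}$ are identifiable, up to label swapping, from the joint distribution of $K_9$.
   Context: Random graph mixture model: nodes have i.i.d. latent groups $Z_i\in\{1,\dots,Q\}$ with $\pi_q=\mathbb P(Z_i=q)\in(0,1)$, $\sum_q\pi_q=1$; edge variables $X_{ij}$ ($i<j$) are conditionally independent given all $Z$'s, with law of $X_{ij}$ depending only on $(Z_i,Z_j)$. In the $\kappa$-state model, $X_{ij}\in\{1,\dots,\kappa\}$ and $\mathbf p_{ql}=(p_{ql}(1),\dots,p_{ql}(\kappa))$ with $p_{ql}(k)=\mathbb P(X_{ij}=k\mid Z_i=q,Z_j=l)$, $\sum_kp_{ql}(k)=1$, and $\mathbf p_{ql}=\mathbf p_{lq}$. $K_n$ denotes the collection of the $\binom n2$ edge variables among $n$ nodes. "Up to label swapping" means up to a permutation of $\{1,\dots,Q\}$ applied simultaneously to all group-indexed parameters. *)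

theory Defs
  imports Complex_Main "HOL-Library.FuncSet" "HOL-Combinatorics.Permutations"
begin

text \<open>Groups are indexed by 0..<Q, edge states by 0..<kappa, nodes by 0..<n.
  pi q = P(Z_i = q); p q l k = P(X_ij = k | Z_i = q, Z_j = l).\<close>

definition valid_params :: "nat \<Rightarrow> nat \<Rightarrow> (nat \<Rightarrow> real) \<Rightarrow> (nat \<Rightarrow> nat \<Rightarrow> nat \<Rightarrow> real) \<Rightarrow> bool" where
  "valid_params Q \<kappa> \<pi> p \<longleftrightarrow>
     (\<forall>q<Q. 0 < \<pi> q \<and> \<pi> q < 1) \<and> (\<Sum>q<Q. \<pi> q) = 1 \<and>
     (\<forall>q<Q. \<forall>l<Q. \<forall>k<\<kappa>. 0 \<le> p q l k) \<and>
     (\<forall>q<Q. \<forall>l<Q. (\<Sum>k<\<kappa>. p q l k) = 1) \<and>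
     (\<forall>q<Q. \<forall>l<Q. \<forall>k<\<kappa>. p q l k = p l q k)"

definition node_pairs :: "nat \<Rightarrow> (nat \<times> nat) set" where
  "node_pairs n = {(i, j). i < j \<and> j < n}"

definition joint_prob :: "nat \<Rightarrow> nat \<Rightarrow> (nat \<Rightarrow> real) \<Rightarrow> (nat \<Rightarrow> nat \<Rightarrow> nat \<Rightarrow> real)
    \<Rightarrow> (nat \<times> nat \<Rightarrow> nat) \<Rightarrow> real" where
  "joint_prob n Q \<pi> p x =
     (\<Sum>z \<in> {..<n} \<rightarrow>\<^sub>E {..<Q}.
        (\<Prod>i<n. \<pi> (z i)) * (\<Prod>(i, j) \<in> node_pairs n. p (z i) (z j) (x (i, j))))"

definition lin_indep_ql :: "nat \<Rightarrow> nat \<Rightarrow> (nat \<Rightarrow> nat \<Rightarrow> nat \<Rightarrow> real) \<Rightarrow> bool" where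
  "lin_indep_ql Q \<kappa> p \<longleftrightarrow>
     (\<forall>c :: nat \<Rightarrow> nat \<Rightarrow> real.
        (\<forall>k<\<kappa>. (\<Sum>(q, l) \<in> {(q, l). q \<le> l \<and> l < Q}. c q l * p q l k) = 0)
        \<longrightarrow> (\<forall>q l. q \<le> l \<and> l < Q \<longrightarrow> c q l = 0))"

end

theory Submission
  imports Defs
begin


definition ip :: "nat \<Rightarrow> (nat \<Rightarrow> real) \<Rightarrow> (nat \<Rightarrow> real) \<Rightarrow> real" where
  "ip \<kappa> f v = (\<Sum>k<\<kappa>. f k * v k)"

definition indep :: "nat \<Rightarrow> 'i set \<Rightarrow> ('i \<Rightarrow> nat \<Rightarrow> real) \<Rightarrow> bool" where
  "indep \<kappa> I v \<longleftrightarrow> (\<forall>c. (\<forall>k<\<kappa>. (\<Sum>i\<in>I. c i * v i k) = 0) \<longrightarrow> (\<forall>i\<in>I. c i = 0))"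

lemma indep_insert:
  assumes "indep \<kappa> (insert a I) v" "a \<notin> I" "finite I"
  shows "indep \<kappa> I v"
  unfolding indep_def
proof (intro allI impI)
  fix c assume h: "\<forall>k<\<kappa>. (\<Sum>i\<in>I. c i * v i k) = 0"
  define c' where "c' = c(a := 0)"
  have "\<forall>k<\<kappa>. (\<Sum>i\<in>insert a I. c' i * v i k) = 0"
  proof (intro allI impI)
    fix k assume "k < \<kappa>"
    have "(\<Sum>i\<in>insert a I. c' i * v i k) = (\<Sum>i\<in>I. c' i * v i k)"
      using assms by (simp add: c'_def)
    also have "\<dots> = (\<Sum>i\<in>I. c i * v i k)"
      using assms by (intro sum.cong) (auto simp: c'_def)
    finally show "(\<Sum>i\<in>insert a I. c' i * v i k) = 0" using h \<open>k<\<kappa>\<close> by simp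
  qed
  then have "\<forall>i\<in>insert a I. c' i = 0" using assms(1) unfolding indep_def by blast
  then show "\<forall>i\<in>I. c i = 0" using assms(2) by (auto simp: c'_def split: if_splits)
qed

lemma dual_exists:
  assumes "finite I" "indep \<kappa> I v" "j \<in> I"
  shows "\<exists>f. \<forall>i\<in>I. ip \<kappa> f (v i) = (if i = j then 1 else 0)"
  using assms
proof (induction I arbitrary: j rule: finite_induct)
  case empty then show ?case by simp
next
  case (insert a I)
  have indI: "indep \<kappa> I v" by (rule indep_insert[OF insert.prems(1) insert.hyps(2,1)])
  have "\<forall>j\<in>I. \<exists>f. \<forall>i\<in>I. ip \<kappa> f (v i) = (if i = j then 1 else 0)"
    using insert.IH[OF indI] by blast
  then obtain g where g0: "\<forall>j\<in>I. \<forall>i\<in>I. ip \<kappa> (g j) (v i) = (if i = j then 1 else 0)"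
    by (metis bchoice)
  then have g: "\<And>j i. j \<in> I \<Longrightarrow> i \<in> I \<Longrightarrow> ip \<kappa> (g j) (v i) = (if i = j then 1 else 0)"
    by blast
  have "\<exists>f0. (\<forall>i\<in>I. ip \<kappa> f0 (v i) = 0) \<and> ip \<kappa> f0 (v a) \<noteq> 0"
  proof (rule ccontr)
    assume na: "\<not> ?thesis"
    define c where "c = (\<lambda>i. if i = a then 1 else - ip \<kappa> (g i) (v a))"
    have "\<forall>k<\<kappa>. (\<Sum>i\<in>insert a I. c i * v i k) = 0"
    proof (intro allI impI)
      fix k assume k: "k < \<kappa>"
      define e where "e = (\<lambda>k'::nat. if k' = k then 1 else (0::real))"
      define F where "F = (\<lambda>k'. e k' - (\<Sum>j\<in>I. ip \<kappa> e (v j) * g j k'))"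
      have ipF: "ip \<kappa> F w = ip \<kappa> e w - (\<Sum>j\<in>I. ip \<kappa> e (v j) * ip \<kappa> (g j) w)" for w
      proof -
        have "(\<Sum>k<\<kappa>. (\<Sum>j\<in>I. ip \<kappa> e (v j) * g j k) * w k)
            = (\<Sum>k<\<kappa>. \<Sum>j\<in>I. ip \<kappa> e (v j) * (g j k * w k))"
          by (simp add: sum_distrib_right mult.assoc)
        also have "\<dots> = (\<Sum>j\<in>I. \<Sum>k<\<kappa>. ip \<kappa> e (v j) * (g j k * w k))"
          by (rule sum.swap)
        also have "\<dots> = (\<Sum>j\<in>I. ip \<kappa> e (v j) * ip \<kappa> (g j) w)"
          by (simp add: ip_def sum_distrib_left)
        finally show ?thesis
          unfolding F_def ip_def by (simp add: left_diff_distrib sum_subtractf)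
      qed
      have "\<forall>i\<in>I. ip \<kappa> F (v i) = 0"
      proof
        fix i assume i: "i \<in> I"
        have "(\<Sum>j\<in>I. ip \<kappa> e (v j) * ip \<kappa> (g j) (v i)) = (\<Sum>j\<in>I. if j = i then ip \<kappa> e (v j) else 0)"
          using g i by (intro sum.cong) auto
        also have "\<dots> = ip \<kappa> e (v i)" using i insert by simp
        finally show "ip \<kappa> F (v i) = 0" using ipF by simp
      qed
      then have "ip \<kappa> F (v a) = 0" using na by blast
      moreover have "ip \<kappa> e w = w k" for w
      proof -
        have "ip \<kappa> e w = (\<Sum>ka<\<kappa>. if ka = k then w ka else 0)"
          unfolding ip_def by (rule sum.cong) (auto simp: e_def)
        then show ?thesis using k by simp
      qed
      ultimately have "v a k - (\<Sum>j\<in>I. v j k * ip \<kappa> (g j) (v a)) = 0"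
        using ipF by simp
      moreover have "(\<Sum>i\<in>insert a I. c i * v i k) = v a k - (\<Sum>j\<in>I. v j k * ip \<kappa> (g j) (v a))"
      proof -
        have "(\<Sum>i\<in>insert a I. c i * v i k) = v a k + (\<Sum>i\<in>I. c i * v i k)"
          using insert by (simp add: c_def)
        also have "(\<Sum>i\<in>I. c i * v i k) = - (\<Sum>j\<in>I. v j k * ip \<kappa> (g j) (v a))"
          unfolding sum_negf[symmetric] using insert.hyps(2)
          by (intro sum.cong) (auto simp: c_def)
        finally show ?thesis by simp
      qed
      ultimately show "(\<Sum>i\<in>insert a I. c i * v i k) = 0" by simp
    qed
    then have "c a = 0" using insert.prems(1) unfolding indep_def by blast
    then show False by (simp add: c_def)
  qed
  then obtain f0 where f0: "\<forall>i\<in>I. ip \<kappa> f0 (v i) = 0" "ip \<kappa> f0 (v a) \<noteq> 0" by blast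
  define fa where "fa = (\<lambda>k. f0 k / ip \<kappa> f0 (v a))"
  have ipfa: "ip \<kappa> fa w = ip \<kappa> f0 w / ip \<kappa> f0 (v a)" for w
    unfolding fa_def ip_def by (simp add: sum_divide_distrib)
  show ?case
  proof (cases "j = a")
    case True
    then show ?thesis using f0 ipfa by (intro exI[of _ fa]) auto
  next
    case False
    then have j: "j \<in> I" using insert.prems by simp
    define fj where "fj = (\<lambda>k. g j k - ip \<kappa> (g j) (v a) * fa k)"
    have ipfj: "ip \<kappa> fj w = ip \<kappa> (g j) w - ip \<kappa> (g j) (v a) * ip \<kappa> fa w" for w
      unfolding fj_def ip_def by (simp add: left_diff_distrib sum_subtractf sum_distrib_left mult.assoc)
    show ?thesis
    proof (intro exI[of _ fj] ballI)
      fix i assume "i \<in> insert a I"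
      then show "ip \<kappa> fj (v i) = (if i = j then 1 else 0)"
        using ipfj ipfa f0 g[OF j] j insert.hyps(2) by auto
    qed
  qed
qed



definition W :: "nat \<Rightarrow> (nat \<Rightarrow> nat \<Rightarrow> nat \<Rightarrow> real) \<Rightarrow> (nat \<Rightarrow> real) \<Rightarrow> nat \<Rightarrow> nat \<Rightarrow> real" where
  "W \<kappa> p \<phi> a b = (\<Sum>k<\<kappa>. \<phi> k * p a b k)"

definition H :: "nat \<Rightarrow> nat \<Rightarrow> (nat \<Rightarrow> real) \<Rightarrow> (nat \<Rightarrow> nat \<Rightarrow> nat \<Rightarrow> real) \<Rightarrow> (nat \<Rightarrow> real) \<Rightarrow> nat \<Rightarrow> real" where
  "H Q \<kappa> \<pi> p \<phi> a = (\<Sum>c<Q. \<pi> c * W \<kappa> p \<phi> a c)"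

definition mom :: "nat \<Rightarrow> nat \<Rightarrow> (nat \<Rightarrow> real) \<Rightarrow> (nat \<Rightarrow> nat \<Rightarrow> nat \<Rightarrow> real) \<Rightarrow>
   (nat \<Rightarrow> real) \<Rightarrow> (nat \<Rightarrow> real) \<Rightarrow> (nat \<Rightarrow> real) \<Rightarrow> (nat \<Rightarrow> real) \<Rightarrow> (nat \<Rightarrow> real) \<Rightarrow> real" where
  "mom Q \<kappa> \<pi> p \<phi>1 \<phi>2 \<phi>3 \<phi>4 \<phi>5 = (\<Sum>x\<in>node_pairs 9 \<rightarrow>\<^sub>E {..<\<kappa>}.
      \<phi>1 (x (0,1)) * \<phi>2 (x (0,2)) * \<phi>3 (x (0,3)) * \<phi>4 (x (0,4)) * \<phi>5 (x (1,5)) * joint_prob 9 Q \<pi> p x)"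

lemma sum_PiE_peel:
  assumes "i \<notin> S"
  shows "(\<Sum>z\<in>PiE (insert i S) B. F z) = (\<Sum>y\<in>B i. \<Sum>g\<in>PiE S B. F (g(i := y)))"
proof -
  have "(\<Sum>z\<in>PiE (insert i S) B. F z) = (\<Sum>(y,g)\<in>B i \<times> PiE S B. F (g(i := y)))"
    unfolding PiE_insert_eq using inj_combinator[OF assms, of B]
    by (subst sum.reindex) (auto simp: case_prod_unfold)
  also have "\<dots> = (\<Sum>y\<in>B i. \<Sum>g\<in>PiE S B. F (g(i := y)))"
    by (rule sum.cartesian_product[symmetric])
  finally show ?thesis .
qed

lemma W_one: "valid_params Q \<kappa> \<pi> p \<Longrightarrow> a < Q \<Longrightarrow> b < Q \<Longrightarrow> W \<kappa> p (\<lambda>_. 1) a b = 1"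
  unfolding W_def valid_params_def by simp

lemma sum_pi_one: "valid_params Q \<kappa> \<pi> p \<Longrightarrow> (\<Sum>c<Q. \<pi> c) = 1"
  unfolding valid_params_def by simp

lemma finite_np: "finite (node_pairs n)"
proof -
  have "node_pairs n \<subseteq> {..<n} \<times> {..<n}" by (auto simp: node_pairs_def)
  then show ?thesis by (rule finite_subset) simp
qed

lemma mom_formula:
  assumes V: "valid_params Q \<kappa> \<pi> p"
  shows "mom Q \<kappa> \<pi> p \<phi>1 \<phi>2 \<phi>3 \<phi>4 \<phi>5 =
    (\<Sum>a<Q. \<pi> a * H Q \<kappa> \<pi> p \<phi>2 a * H Q \<kappa> \<pi> p \<phi>3 a * H Q \<kappa> \<pi> p \<phi>4 a *
       (\<Sum>b<Q. \<pi> b * W \<kappa> p \<phi>1 a b * H Q \<kappa> \<pi> p \<phi>5 b))"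
proof -
  define NP where "NP = node_pairs 9"
  define E5 where "E5 = {(0::nat,1::nat),(0,2),(0,3),(0,4),(1,5)}"
  define \<psi> :: "nat \<times> nat \<Rightarrow> nat \<Rightarrow> real" where "\<psi> = (\<lambda>e. if e = (0,1) then \<phi>1 else if e = (0,2) then \<phi>2 else if e = (0,3) then \<phi>3
      else if e = (0,4) then \<phi>4 else if e = (1,5) then \<phi>5 else (\<lambda>_::nat. 1::real))"
  have finNP: "finite NP" unfolding NP_def by (rule finite_np)
  have E5NP: "E5 \<subseteq> NP" unfolding E5_def NP_def node_pairs_def by auto
  have psi_out: "e \<notin> E5 \<Longrightarrow> \<psi> e = (\<lambda>_. 1)" for e unfolding \<psi>_def E5_def by auto
  have step1: "(\<Prod>e\<in>NP. \<psi> e (x e)) = \<phi>1 (x (0,1)) * \<phi>2 (x (0,2)) * \<phi>3 (x (0,3)) * \<phi>4 (x (0,4)) * \<phi>5 (x (1,5))" for x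
  proof -
    have "(\<Prod>e\<in>NP. \<psi> e (x e)) = (\<Prod>e\<in>E5. \<psi> e (x e))"
      using finNP E5NP psi_out by (intro prod.mono_neutral_right) auto
    also have "\<dots> = \<phi>1 (x (0,1)) * \<phi>2 (x (0,2)) * \<phi>3 (x (0,3)) * \<phi>4 (x (0,4)) * \<phi>5 (x (1,5))"
      unfolding E5_def \<psi>_def by (simp add: mult_ac)
    finally show ?thesis .
  qed
  define Z where "Z = {..<(9::nat)} \<rightarrow>\<^sub>E {..<Q}"
  define X where "X = NP \<rightarrow>\<^sub>E {..<\<kappa>}"
  have "mom Q \<kappa> \<pi> p \<phi>1 \<phi>2 \<phi>3 \<phi>4 \<phi>5 = (\<Sum>x\<in>X. (\<Prod>e\<in>NP. \<psi> e (x e)) *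
      (\<Sum>z\<in>Z. (\<Prod>i<9. \<pi> (z i)) * (\<Prod>e\<in>NP. p (z (fst e)) (z (snd e)) (x e))))"
    unfolding mom_def joint_prob_def X_def Z_def NP_def[symmetric] by (simp add: step1 case_prod_unfold)
  also have "\<dots> = (\<Sum>z\<in>Z. (\<Prod>i<9. \<pi> (z i)) * (\<Sum>x\<in>X. \<Prod>e\<in>NP. \<psi> e (x e) * p (z (fst e)) (z (snd e)) (x e)))"
    by (simp add: sum_distrib_left sum_distrib_right prod.distrib mult_ac sum.swap[of _ X])
  also have "\<dots> = (\<Sum>z\<in>Z. (\<Prod>i<9. \<pi> (z i)) * (\<Prod>e\<in>NP. W \<kappa> p (\<psi> e) (z (fst e)) (z (snd e))))"
    unfolding X_def W_def using finNP by (simp add: prod_sum_PiE)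
  also have "\<dots> = (\<Sum>z\<in>Z. (\<Prod>i<9. \<pi> (z i)) * (W \<kappa> p \<phi>1 (z 0) (z 1) * W \<kappa> p \<phi>2 (z 0) (z 2) *
       W \<kappa> p \<phi>3 (z 0) (z 3) * W \<kappa> p \<phi>4 (z 0) (z 4) * W \<kappa> p \<phi>5 (z 1) (z 5)))"
  proof (rule sum.cong[OF refl])
    fix z assume z: "z \<in> Z"
    have "(\<Prod>e\<in>NP. W \<kappa> p (\<psi> e) (z (fst e)) (z (snd e))) = (\<Prod>e\<in>E5. W \<kappa> p (\<psi> e) (z (fst e)) (z (snd e)))"
    proof (intro prod.mono_neutral_right[OF finNP E5NP] ballI)
      fix e assume e: "e \<in> NP - E5"
      then have "fst e < 9" "snd e < 9" unfolding NP_def node_pairs_def by auto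
      then have "z (fst e) < Q" "z (snd e) < Q" using z unfolding Z_def by auto
      then show "W \<kappa> p (\<psi> e) (z (fst e)) (z (snd e)) = 1" using psi_out[of e] e W_one[OF V] by simp
    qed
    also have "\<dots> = W \<kappa> p \<phi>1 (z 0) (z 1) * W \<kappa> p \<phi>2 (z 0) (z 2) *
       W \<kappa> p \<phi>3 (z 0) (z 3) * W \<kappa> p \<phi>4 (z 0) (z 4) * W \<kappa> p \<phi>5 (z 1) (z 5)"
      unfolding E5_def \<psi>_def by (simp add: mult_ac)
    finally show "(\<Prod>i<9. \<pi> (z i)) * (\<Prod>e\<in>NP. W \<kappa> p (\<psi> e) (z (fst e)) (z (snd e))) =
      (\<Prod>i<9. \<pi> (z i)) * (W \<kappa> p \<phi>1 (z 0) (z 1) * W \<kappa> p \<phi>2 (z 0) (z 2) *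
       W \<kappa> p \<phi>3 (z 0) (z 3) * W \<kappa> p \<phi>4 (z 0) (z 4) * W \<kappa> p \<phi>5 (z 1) (z 5))" by simp
  qed
  also have "\<dots> = (\<Sum>a<Q. \<pi> a * H Q \<kappa> \<pi> p \<phi>2 a * H Q \<kappa> \<pi> p \<phi>3 a * H Q \<kappa> \<pi> p \<phi>4 a *
       (\<Sum>b<Q. \<pi> b * W \<kappa> p \<phi>1 a b * H Q \<kappa> \<pi> p \<phi>5 b))"
  proof -
    define S where "S = {2,3,4,5,6,7,8::nat}"
    have U9: "{..<9::nat} = insert 0 (insert 1 S)" unfolding S_def by auto
    define G where "G = (\<lambda>z::nat\<Rightarrow>nat. (\<Prod>i<9. \<pi> (z i)) * (W \<kappa> p \<phi>1 (z 0) (z 1) * W \<kappa> p \<phi>2 (z 0) (z 2) *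
       W \<kappa> p \<phi>3 (z 0) (z 3) * W \<kappa> p \<phi>4 (z 0) (z 4) * W \<kappa> p \<phi>5 (z 1) (z 5)))"
    have "(\<Sum>z\<in>Z. G z) = (\<Sum>a<Q. \<Sum>b<Q. \<Sum>g\<in>PiE S (\<lambda>_. {..<Q}). G (g(1 := b, 0 := a)))"
      unfolding Z_def U9 by (simp add: sum_PiE_peel S_def)
    also have "\<dots> = (\<Sum>a<Q. \<Sum>b<Q. \<pi> a * \<pi> b * W \<kappa> p \<phi>1 a b *
        (H Q \<kappa> \<pi> p \<phi>2 a * H Q \<kappa> \<pi> p \<phi>3 a * H Q \<kappa> \<pi> p \<phi>4 a * H Q \<kappa> \<pi> p \<phi>5 b))"
    proof (intro sum.cong refl)
      fix a b
      define h where "h = (\<lambda>i c. \<pi> c * (if i = 2 then W \<kappa> p \<phi>2 a c else if i = 3 then W \<kappa> p \<phi>3 a c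
          else if i = 4 then W \<kappa> p \<phi>4 a c else if i = (5::nat) then W \<kappa> p \<phi>5 b c else 1))"
      have G_eq: "G (g(1 := b, 0 := a)) = \<pi> a * \<pi> b * W \<kappa> p \<phi>1 a b * (\<Prod>i\<in>S. h i (g i))" for g
        unfolding G_def h_def U9 by (simp add: S_def mult_ac)
      have "(\<Sum>g\<in>PiE S (\<lambda>_. {..<Q}). G (g(1 := b, 0 := a))) =
          \<pi> a * \<pi> b * W \<kappa> p \<phi>1 a b * (\<Sum>g\<in>PiE S (\<lambda>_. {..<Q}). \<Prod>i\<in>S. h i (g i))"
        unfolding G_eq by (simp add: sum_distrib_left)
      also have "(\<Sum>g\<in>PiE S (\<lambda>_. {..<Q}). \<Prod>i\<in>S. h i (g i)) = (\<Prod>i\<in>S. \<Sum>c<Q. h i c)"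
        by (rule prod_sum_PiE[symmetric]) (auto simp: S_def)
      also have "\<dots> = H Q \<kappa> \<pi> p \<phi>2 a * H Q \<kappa> \<pi> p \<phi>3 a * H Q \<kappa> \<pi> p \<phi>4 a * H Q \<kappa> \<pi> p \<phi>5 b"
        unfolding S_def h_def H_def using sum_pi_one[OF V] by simp
      finally show "(\<Sum>g\<in>PiE S (\<lambda>_. {..<Q}). G (g(1 := b, 0 := a))) = \<pi> a * \<pi> b * W \<kappa> p \<phi>1 a b *
        (H Q \<kappa> \<pi> p \<phi>2 a * H Q \<kappa> \<pi> p \<phi>3 a * H Q \<kappa> \<pi> p \<phi>4 a * H Q \<kappa> \<pi> p \<phi>5 b)" .
    qed
    also have "\<dots> = (\<Sum>a<Q. \<pi> a * H Q \<kappa> \<pi> p \<phi>2 a * H Q \<kappa> \<pi> p \<phi>3 a * H Q \<kappa> \<pi> p \<phi>4 a *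
       (\<Sum>b<Q. \<pi> b * W \<kappa> p \<phi>1 a b * H Q \<kappa> \<pi> p \<phi>5 b))"
      by (intro sum.cong refl) (simp add: sum_distrib_left mult_ac)
    finally show ?thesis unfolding G_def .
  qed
  finally show ?thesis .
qed


lemma sum_single:
  fixes F :: "nat \<Rightarrow> real"
  assumes "t < Q" "\<And>a. a < Q \<Longrightarrow> a \<noteq> t \<Longrightarrow> F a = 0"
  shows "(\<Sum>a<Q. F a) = F t"
proof -
  have "(\<Sum>a<Q. F a) = F t + (\<Sum>a\<in>{..<Q} - {t}. F a)"
    using assms(1) by (subst sum.remove[of _ t]) auto
  also have "(\<Sum>a\<in>{..<Q} - {t}. F a) = 0" using assms(2) by (intro sum.neutral) auto
  finally show ?thesis by simp
qed

lemma H_one: assumes V: "valid_params Q \<kappa> \<pi> p" and a: "a < Q" shows "H Q \<kappa> \<pi> p (\<lambda>_. 1) a = 1"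
proof -
  have "H Q \<kappa> \<pi> p (\<lambda>_. 1) a = (\<Sum>c<Q. \<pi> c)"
    unfolding H_def by (rule sum.cong) (simp_all add: W_one[OF V a])
  then show ?thesis using sum_pi_one[OF V] by simp
qed

lemma star_formula:
  assumes V: "valid_params Q \<kappa> \<pi> p"
  shows "mom Q \<kappa> \<pi> p \<phi>1 \<phi>2 \<phi>3 \<phi>4 (\<lambda>_. 1) =
    (\<Sum>a<Q. \<pi> a * H Q \<kappa> \<pi> p \<phi>2 a * H Q \<kappa> \<pi> p \<phi>3 a * H Q \<kappa> \<pi> p \<phi>4 a * H Q \<kappa> \<pi> p \<phi>1 a)"
  unfolding mom_formula[OF V]
proof (intro sum.cong refl)
  fix a assume "a \<in> {..<Q}"
  have "(\<Sum>b<Q. \<pi> b * W \<kappa> p \<phi>1 a b * H Q \<kappa> \<pi> p (\<lambda>_. 1) b) = H Q \<kappa> \<pi> p \<phi>1 a"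
    unfolding H_def[of _ _ _ _ \<phi>1] using H_one[OF V] by (intro sum.cong refl) simp
  then show "\<pi> a * H Q \<kappa> \<pi> p \<phi>2 a * H Q \<kappa> \<pi> p \<phi>3 a * H Q \<kappa> \<pi> p \<phi>4 a *
       (\<Sum>b<Q. \<pi> b * W \<kappa> p \<phi>1 a b * H Q \<kappa> \<pi> p (\<lambda>_. 1) b) =
    \<pi> a * H Q \<kappa> \<pi> p \<phi>2 a * H Q \<kappa> \<pi> p \<phi>3 a * H Q \<kappa> \<pi> p \<phi>4 a * H Q \<kappa> \<pi> p \<phi>1 a" by simp
qed

lemma duals:
  assumes V: "valid_params Q \<kappa> \<pi> p" and L: "lin_indep_ql Q \<kappa> p"
  shows "\<exists>f. \<forall>t<Q. \<forall>a<Q. \<forall>b<Q. W \<kappa> p (f t) a b = (if a = t \<and> b = t then 1 else 0)"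
proof -
  define U where "U = {(q, l). q \<le> l \<and> l < (Q::nat)}"
  define v where "v = (\<lambda>i::nat\<times>nat. p (fst i) (snd i))"
  have finU: "finite U"
  proof -
    have "U \<subseteq> {..<Q} \<times> {..<Q}" unfolding U_def by auto
    then show ?thesis by (rule finite_subset) simp
  qed
  have ind: "indep \<kappa> U v"
    unfolding indep_def
  proof (intro allI impI)
    fix c :: "nat \<times> nat \<Rightarrow> real"
    assume h: "\<forall>k<\<kappa>. (\<Sum>i\<in>U. c i * v i k) = 0"
    have "\<forall>k<\<kappa>. (\<Sum>(q, l) \<in> {(q, l). q \<le> l \<and> l < Q}. (\<lambda>q l. c (q,l)) q l * p q l k) = 0"
      using h unfolding U_def v_def by (simp add: case_prod_unfold)
    then have "\<forall>q l. q \<le> l \<and> l < Q \<longrightarrow> c (q,l) = 0"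
      by (rule mp[OF spec[OF L[unfolded lin_indep_ql_def], of "\<lambda>q l. c (q,l)"]])
    then show "\<forall>i\<in>U. c i = 0" unfolding U_def by auto
  qed
  have "\<forall>t\<in>{..<Q}. \<exists>f. \<forall>i\<in>U. ip \<kappa> f (v i) = (if i = (t,t) then 1 else 0)"
  proof
    fix t assume "t \<in> {..<Q}"
    then have "(t,t) \<in> U" unfolding U_def by simp
    then show "\<exists>f. \<forall>i\<in>U. ip \<kappa> f (v i) = (if i = (t,t) then 1 else 0)"
      by (rule dual_exists[OF finU ind])
  qed
  then obtain f where f: "\<forall>t\<in>{..<Q}. \<forall>i\<in>U. ip \<kappa> (f t) (v i) = (if i = (t,t) then 1 else 0)"
    by (metis bchoice)
  show ?thesis
  proof (intro exI[of _ f] allI impI)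
    fix t a b assume t: "t < Q" and a: "a < Q" and b: "b < Q"
    show "W \<kappa> p (f t) a b = (if a = t \<and> b = t then 1 else 0)"
    proof (cases "a \<le> b")
      case True
      then have "(a,b) \<in> U" using b by (simp add: U_def)
      then have "ip \<kappa> (f t) (v (a,b)) = (if (a,b) = (t,t) then 1 else 0)" using f t by blast
      then show ?thesis unfolding W_def ip_def v_def by simp
    next
      case False
      then have "(b,a) \<in> U" using a by (simp add: U_def)
      moreover have "W \<kappa> p (f t) a b = W \<kappa> p (f t) b a"
        using V a b unfolding W_def valid_params_def by (intro sum.cong) auto
      moreover have "ip \<kappa> (f t) (v (b,a)) = (if (b,a) = (t,t) then 1 else 0)" using f t calculation(1) by blast
      ultimately show ?thesis using False unfolding W_def ip_def v_def by auto
    qed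
  qed
qed

theorem theorem7:
  fixes Q \<kappa> :: nat and \<pi> \<pi>' :: "nat \<Rightarrow> real" and p p' :: "nat \<Rightarrow> nat \<Rightarrow> nat \<Rightarrow> real"
  assumes "Q \<ge> 2"
    and "valid_params Q \<kappa> \<pi> p"
    and "\<kappa> \<ge> (Q + 1) choose 2"
    and "lin_indep_ql Q \<kappa> p"
    and "valid_params Q \<kappa> \<pi>' p'"
    and "\<forall>x \<in> node_pairs 9 \<rightarrow>\<^sub>E {..<\<kappa>}. joint_prob 9 Q \<pi>' p' x = joint_prob 9 Q \<pi> p x"
  shows "\<exists>\<sigma>. \<sigma> permutes {..<Q} \<and> (\<forall>q<Q. \<pi>' q = \<pi> (\<sigma> q)) \<and>
           (\<forall>q<Q. \<forall>l<Q. \<forall>k<\<kappa>. p' q l k = p (\<sigma> q) (\<sigma> l) k)"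
proof -
  note V = assms(2) and V' = assms(5)
  have E: "mom Q \<kappa> \<pi>' p' \<phi>1 \<phi>2 \<phi>3 \<phi>4 \<phi>5 = mom Q \<kappa> \<pi> p \<phi>1 \<phi>2 \<phi>3 \<phi>4 \<phi>5" for \<phi>1 \<phi>2 \<phi>3 \<phi>4 \<phi>5
    unfolding mom_def using assms(6) by (intro sum.cong) auto
  have pipos: "\<And>q. q < Q \<Longrightarrow> 0 < \<pi> q" and pipos': "\<And>q. q < Q \<Longrightarrow> 0 < \<pi>' q"
    using V V' unfolding valid_params_def by auto
  obtain f where f: "\<And>t a b. t < Q \<Longrightarrow> a < Q \<Longrightarrow> b < Q \<Longrightarrow> W \<kappa> p (f t) a b = (if a = t \<and> b = t then 1 else 0)"
    using duals[OF V assms(4)] by blast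
  have Hf: "H Q \<kappa> \<pi> p (f t) a = (if a = t then \<pi> t else 0)" if "t < Q" "a < Q" for t a
  proof -
    have "H Q \<kappa> \<pi> p (f t) a = (\<Sum>c<Q. if a = t \<and> c = t then \<pi> c else 0)"
      unfolding H_def using f that by (intro sum.cong) auto
    also have "\<dots> = (if a = t then \<pi> t else 0)"
      using that by (cases "a = t") (simp_all add: sum_single)
    finally show ?thesis .
  qed
  define h where "h = (\<lambda>t a. H Q \<kappa> \<pi>' p' (f t) a)"
  have one: "H Q \<kappa> \<pi> p (\<lambda>_. 1) a = 1" "H Q \<kappa> \<pi>' p' (\<lambda>_. 1) a = 1" if "a < Q" for a
    using H_one[OF V that] H_one[OF V' that] by auto
  have A: "(\<Sum>a<Q. \<pi>' a * h t a) = \<pi> t * \<pi> t" if t: "t < Q" for t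
  proof -
    have "(\<Sum>a<Q. \<pi>' a * h t a) = mom Q \<kappa> \<pi>' p' (f t) (\<lambda>_. 1) (\<lambda>_. 1) (\<lambda>_. 1) (\<lambda>_. 1)"
      unfolding star_formula[OF V'] h_def using one by (intro sum.cong) auto
    also have "\<dots> = mom Q \<kappa> \<pi> p (f t) (\<lambda>_. 1) (\<lambda>_. 1) (\<lambda>_. 1) (\<lambda>_. 1)" by (rule E)
    also have "\<dots> = (\<Sum>a<Q. \<pi> a * (if a = t then \<pi> t else 0))"
      unfolding star_formula[OF V] using one Hf t by (intro sum.cong) auto
    also have "\<dots> = \<pi> t * \<pi> t" using t by (subst sum_single[of t]) auto
    finally show ?thesis .
  qed
  have B: "(\<Sum>a<Q. \<pi>' a * h t a * h t a) = \<pi> t * \<pi> t * \<pi> t" if t: "t < Q" for t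
  proof -
    have "(\<Sum>a<Q. \<pi>' a * h t a * h t a) = mom Q \<kappa> \<pi>' p' (f t) (f t) (\<lambda>_. 1) (\<lambda>_. 1) (\<lambda>_. 1)"
      unfolding star_formula[OF V'] h_def using one by (intro sum.cong) auto
    also have "\<dots> = mom Q \<kappa> \<pi> p (f t) (f t) (\<lambda>_. 1) (\<lambda>_. 1) (\<lambda>_. 1)" by (rule E)
    also have "\<dots> = (\<Sum>a<Q. \<pi> a * (if a = t then \<pi> t * \<pi> t else 0))"
      unfolding star_formula[OF V] using one Hf t by (intro sum.cong) auto
    also have "\<dots> = \<pi> t * \<pi> t * \<pi> t" using t by (subst sum_single[of t]) auto
    finally show ?thesis .
  qed
  have C: "h q a * h s a = 0" if "q < Q" "s < Q" "q \<noteq> s" "a < Q" for q s a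
  proof -
    have "(\<Sum>a<Q. \<pi>' a * (h q a * h s a)\<^sup>2) = mom Q \<kappa> \<pi>' p' (f q) (f q) (f s) (f s) (\<lambda>_. 1)"
      unfolding star_formula[OF V'] h_def by (intro sum.cong) (auto simp: power2_eq_square)
    also have "\<dots> = mom Q \<kappa> \<pi> p (f q) (f q) (f s) (f s) (\<lambda>_. 1)" by (rule E)
    also have "\<dots> = 0"
      unfolding star_formula[OF V] using Hf that(1-3) by (intro sum.neutral) auto
    finally have "(\<Sum>a<Q. \<pi>' a * (h q a * h s a)\<^sup>2) = 0" .
    moreover have "\<forall>a\<in>{..<Q}. 0 \<le> \<pi>' a * (h q a * h s a)\<^sup>2"
    proof
      fix a assume "a \<in> {..<Q}"
      then have "0 < \<pi>' a" using pipos' by simp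
      then show "0 \<le> \<pi>' a * (h q a * h s a)\<^sup>2" by simp
    qed
    ultimately have "\<forall>a\<in>{..<Q}. \<pi>' a * (h q a * h s a)\<^sup>2 = 0"
      using sum_nonneg_eq_0_iff[of "{..<Q}" "\<lambda>a. \<pi>' a * (h q a * h s a)\<^sup>2"] by simp
    then have "\<pi>' a * (h q a * h s a)\<^sup>2 = 0" using that(4) by simp
    then show ?thesis using pipos'[OF that(4)] by simp
  qed
  have ex: "\<exists>a. a < Q \<and> h t a \<noteq> 0" if t: "t < Q" for t
  proof (rule ccontr)
    assume "\<not> ?thesis"
    then have "(\<Sum>a<Q. \<pi>' a * h t a) = 0" by (intro sum.neutral) auto
    with A[OF t] pipos[OF t] show False by simp
  qed
  define \<sigma> where "\<sigma> = (\<lambda>t. if t < Q then (SOME a. a < Q \<and> h t a \<noteq> 0) else t)"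
  have sig: "\<sigma> t < Q \<and> h t (\<sigma> t) \<noteq> 0" if "t < Q" for t
    using someI_ex[OF ex[OF that]] that unfolding \<sigma>_def by simp
  have inj: "inj_on \<sigma> {..<Q}"
  proof (rule inj_onI)
    fix q s assume q: "q \<in> {..<Q}" and s: "s \<in> {..<Q}" and eq: "\<sigma> q = \<sigma> s"
    show "q = s"
    proof (rule ccontr)
      assume "q \<noteq> s"
      moreover have qQ: "q < Q" and sQ: "s < Q" using q s by auto
      moreover have "\<sigma> q < Q" using sig[OF qQ] by simp
      ultimately have "h q (\<sigma> q) * h s (\<sigma> q) = 0" using C by blast
      moreover have "h q (\<sigma> q) \<noteq> 0" using sig[OF qQ] by simp
      moreover have "h s (\<sigma> q) \<noteq> 0" using sig[OF sQ] eq by simp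
      ultimately show False by simp
    qed
  qed
  have img: "\<sigma> ` {..<Q} = {..<Q}" using sig inj by (intro endo_inj_surj) auto
  have perm: "\<sigma> permutes {..<Q}"
    using inj img by (intro bij_imp_permutes) (auto simp: bij_betw_def \<sigma>_def)
  have D: "h t a = 0" if tQ: "t < Q" and aQ: "a < Q" and ne: "a \<noteq> \<sigma> t" for t a
  proof -
    have "a \<in> \<sigma> ` {..<Q}" using img aQ by simp
    then obtain s where s: "s < Q" "a = \<sigma> s" by auto
    then have "s \<noteq> t" using ne by auto
    then have "h t a * h s a = 0" using C[OF tQ s(1) _ aQ] by auto
    then show ?thesis using sig[OF s(1)] s by auto
  qed
  have A1: "\<pi>' (\<sigma> t) * h t (\<sigma> t) = \<pi> t * \<pi> t" if t: "t < Q" for t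
    using A[OF t] D[OF t] sig[OF t] by (subst (asm) sum_single[of "\<sigma> t"]) auto
  have B1: "\<pi>' (\<sigma> t) * h t (\<sigma> t) * h t (\<sigma> t) = \<pi> t * \<pi> t * \<pi> t" if t: "t < Q" for t
    using B[OF t] D[OF t] sig[OF t] by (subst (asm) sum_single[of "\<sigma> t"]) auto
  have hval: "h t (\<sigma> t) = \<pi> t" and pival: "\<pi>' (\<sigma> t) = \<pi> t" if t: "t < Q" for t
  proof -
    have "\<pi> t * \<pi> t * h t (\<sigma> t) = \<pi> t * \<pi> t * \<pi> t" using A1[OF t] B1[OF t] by simp
    then show h1: "h t (\<sigma> t) = \<pi> t" using pipos[OF t] by simp
    show "\<pi>' (\<sigma> t) = \<pi> t" using A1[OF t] pipos[OF t] unfolding h1 by simp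
  qed
  have hform: "h t a = (if a = \<sigma> t then \<pi> t else 0)" if "t < Q" "a < Q" for t a
    using D hval that by auto
  have pval: "p' (\<sigma> q) (\<sigma> l) k = p q l k" if q: "q < Q" and l: "l < Q" and k: "k < \<kappa>" for q l k
  proof -
    define e where "e = (\<lambda>k'::nat. if k' = k then 1 else (0::real))"
    have We: "W \<kappa> pp e a b = pp a b k" for pp a b
    proof -
      have "W \<kappa> pp e a b = (\<Sum>k'<\<kappa>. if k' = k then pp a b k' else 0)"
        unfolding W_def e_def by (intro sum.cong) auto
      then show ?thesis using k by simp
    qed
    have "\<pi> q * \<pi> q * (\<pi> l * p' (\<sigma> q) (\<sigma> l) k * \<pi> l) =
        \<pi>' (\<sigma> q) * h q (\<sigma> q) * 1 * 1 * (\<Sum>b<Q. \<pi>' b * W \<kappa> p' e (\<sigma> q) b * h l b)"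
    proof -
      have "(\<Sum>b<Q. \<pi>' b * W \<kappa> p' e (\<sigma> q) b * h l b) = \<pi>' (\<sigma> l) * W \<kappa> p' e (\<sigma> q) (\<sigma> l) * h l (\<sigma> l)"
        using sig[OF l] hform[OF l] by (intro sum_single) auto
      then show ?thesis using hval q l pival We by simp
    qed
    also have "\<dots> = (\<Sum>a<Q. \<pi>' a * h q a * 1 * 1 * (\<Sum>b<Q. \<pi>' b * W \<kappa> p' e a b * h l b))"
      using sig[OF q] hform[OF q] by (intro sum_single[symmetric]) auto
    also have "\<dots> = mom Q \<kappa> \<pi>' p' e (f q) (\<lambda>_. 1) (\<lambda>_. 1) (f l)"
      unfolding mom_formula[OF V'] h_def using one(2) by (intro sum.cong) auto
    also have "\<dots> = mom Q \<kappa> \<pi> p e (f q) (\<lambda>_. 1) (\<lambda>_. 1) (f l)" by (rule E)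
    also have "\<dots> = \<pi> q * \<pi> q * (\<pi> l * p q l k * \<pi> l)"
    proof -
      have "(\<Sum>b<Q. \<pi> b * W \<kappa> p e q b * H Q \<kappa> \<pi> p (f l) b) = \<pi> l * p q l k * \<pi> l"
        using l Hf[OF l] We by (subst sum_single[of l]) auto
      then show ?thesis
        unfolding mom_formula[OF V] using q Hf[OF q] one(1)
        by (subst sum_single[of q]) auto
    qed
    finally show ?thesis using pipos[OF q] pipos[OF l] by simp
  qed
  define \<tau> where "\<tau> = inv \<sigma>"
  have perm\<tau>: "\<tau> permutes {..<Q}" unfolding \<tau>_def by (rule permutes_inv[OF perm])
  have st: "\<sigma> (\<tau> x) = x" for x unfolding \<tau>_def by (rule permutes_inverses(1)[OF perm])
  have \<tau>Q: "\<tau> x < Q" if "x < Q" for x using permutes_in_image[OF perm\<tau>, of x] that by simp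
  show ?thesis
  proof (intro exI[of _ \<tau>] conjI allI impI)
    show "\<tau> permutes {..<Q}" by (rule perm\<tau>)
  next
    fix q assume q: "q < Q"
    show "\<pi>' q = \<pi> (\<tau> q)" using pival[OF \<tau>Q[OF q]] st by simp
  next
    fix q l k assume q: "q < Q" and l: "l < Q" and k: "k < \<kappa>"
    show "p' q l k = p (\<tau> q) (\<tau> l) k" using pval[OF \<tau>Q[OF q] \<tau>Q[OF l] k] st by simp
  qed
qed

end
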